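(* Let $p,g_i,S,d,R,\eta_i,\beta,f_\gamma,N,D,p^*$ be as in the context. Suppose that for all positive integers $n',d'$ and all integers $r\ge 0$ we are given a set $K^r_{n',2d'}$ of forms of degree $2d'$ in $n'$ variables such that: (a) $K^r_{n',2d'}\subseteq P_{n',2d'}$ for all $r$, and there exists a positive definite form $s_{n',2d'}\in K^0_{n',2d'}$; (b) if a form $q$ of degree $2d'$ in $n'$ variables is positive definite, then there exists $r\in\mathbb{N}$ with $q\in K^r_{n',2d'}$; (c) $K^r_{n',2d'}\subseteq K^{r+1}_{n',2d'}$ for all $r$; (d) if $q\in K^r_{n',2d'}$, then $q+\epsilon\, s_{n',2d'}\in K^r_{n',2d'}$ for all $\epsilon\in[0,1]$. For each positive integer $r$ let $$l_r=\sup\Big\{\gamma\in\mathbb{R} : f_\gamma(z)-\tfrac{1}{r}s_{N,2D}(z)\in K^r_{N,2D}\Big\}$$ (with $\sup\emptyset=-\infty$). Then $l_r\le p^*$ for all $r$, the sequence $\{l_r\}$ is nondecreasing, and $\lim_{r\to\infty}l_r=p^*$.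
   Context: Let $p,g_1,\dots,g_m$ be real polynomials in $x=(x_1,\dots,x_n)$ and let $S=\{x\in\mathbb{R}^n : g_i(x)\ge 0,\ i=1,\dots,m\}$. Let $p^*=\inf_{x\in S}p(x)$ (with $p^*=+\infty$ if $S=\emptyset$). Let $d\ge 1$ be the integer such that $2d$ is the smallest even integer larger than or equal to the maximum of the degrees of $p,g_1,\dots,g_m$. Assume there is $R>0$ with $\sum_{i=1}^n x_i^2\le R$ for all $x\in S$. Let $\eta_1,\dots,\eta_m$ be real numbers with $g_i(x)\le\eta_i$ for all $x\in S$, and let $\beta$ be a real number with $-p(x)\le\beta$ for all $x\in S$. For a polynomial $q$ in $x$ of degree at most $2d$, $y^{2d}q(x/y)$ denotes its homogenization to a form of degree $2d$ in $(x,y)$. For $\gamma\in\mathbb{R}$ define the form in the variables $z=(x,s,y)=(x_1,\dots,x_n,s_0,\dots,s_{m+1},y)$: $$f_\gamma(x,s,y)=\big(\gamma y^{2d}-y^{2d}p(x/y)-s_0^2y^{2d-2}\big)^2+\sum_{i=1}^m\big(y^{2d}g_i(x/y)-s_i^2y^{2d-2}\big)^2+\Big(\big(R+\textstyle\sum_{i=1}^m\eta_i+\beta+\gamma\big)^d y^{2d}-\big(\sum_{i=1}^n x_i^2+\sum_{i=0}^m s_i^2\big)^d-s_{m+1}^{2d}\Big)^2.$$ Set $N=n+m+3$ and $D=2d$, so $f_\gamma$ is a form of degree $2D$ in $N$ variables. $P_{n',2d'}$ denotes the set of nonnegative forms (forms $q$ with $q(x)\ge0$ for all $x$) of degree $2d'$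 in $n'$ variables; a form is positive definite if it is positive at every nonzero point. *)

theory Defs
  imports "HOL-Analysis.Analysis" "HOL-Library.Extended_Real"
begin

text \<open>Points of R^n are represented as functions nat => real (only coordinates < n matter).
Exponent vectors are functions alpha :: nat => nat.\<close>

definition monom :: "nat \<Rightarrow> (nat \<Rightarrow> nat) \<Rightarrow> (nat \<Rightarrow> real) \<Rightarrow> real" where
  "monom n \<alpha> x = (\<Prod>i<n. x i ^ \<alpha> i)"

definition tdeg :: "nat \<Rightarrow> (nat \<Rightarrow> nat) \<Rightarrow> nat" where
  "tdeg n \<alpha> = (\<Sum>i<n. \<alpha> i)"

definition hexps :: "nat \<Rightarrow> nat \<Rightarrow> (nat \<Rightarrow> nat) set" where
  "hexps n k = {\<alpha>. (\<forall>i\<ge>n. \<alpha> i = 0) \<and> tdeg n \<alpha> = k}"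

definition is_form :: "nat \<Rightarrow> nat \<Rightarrow> ((nat \<Rightarrow> real) \<Rightarrow> real) \<Rightarrow> bool" where
  "is_form n k f \<longleftrightarrow> (\<exists>c. \<forall>x. f x = (\<Sum>\<alpha>\<in>hexps n k. c \<alpha> * monom n \<alpha> x))"

definition nonneg_forms :: "nat \<Rightarrow> nat \<Rightarrow> ((nat \<Rightarrow> real) \<Rightarrow> real) set" where
  "nonneg_forms n k = {f. is_form n k f \<and> (\<forall>x. f x \<ge> 0)}"

definition pos_def :: "nat \<Rightarrow> ((nat \<Rightarrow> real) \<Rightarrow> real) \<Rightarrow> bool" where
  "pos_def n f \<longleftrightarrow> (\<forall>x. (\<exists>i<n. x i \<noteq> 0) \<longrightarrow> f x > 0)"

text \<open>Polynomials in n variables are given by coefficient functions c :: (nat => nat) => real.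
deg_le n k c: c is a polynomial in the variables x_0..x_{n-1} of degree at most k.\<close>
definition deg_le :: "nat \<Rightarrow> nat \<Rightarrow> ((nat \<Rightarrow> nat) \<Rightarrow> real) \<Rightarrow> bool" where
  "deg_le n k c \<longleftrightarrow> (\<forall>\<alpha>. c \<alpha> \<noteq> 0 \<longrightarrow> (\<forall>i\<ge>n. \<alpha> i = 0) \<and> tdeg n \<alpha> \<le> k)"

definition peval :: "nat \<Rightarrow> ((nat \<Rightarrow> nat) \<Rightarrow> real) \<Rightarrow> (nat \<Rightarrow> real) \<Rightarrow> real" where
  "peval n c x = (\<Sum>\<alpha> | c \<alpha> \<noteq> 0. c \<alpha> * monom n \<alpha> x)"

text \<open>Homogenization y^k q(x/y) of a polynomial q of degree <= k, written via coefficients;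
x-variables are z 0..z (n-1), and y is z yi.\<close>
definition homog :: "nat \<Rightarrow> nat \<Rightarrow> ((nat \<Rightarrow> nat) \<Rightarrow> real) \<Rightarrow> nat \<Rightarrow> (nat \<Rightarrow> real) \<Rightarrow> real" where
  "homog n k c yi z = (\<Sum>\<alpha> | c \<alpha> \<noteq> 0. c \<alpha> * monom n \<alpha> z * z yi ^ (k - tdeg n \<alpha>))"

text \<open>The form f_gamma in z = (x_0..x_{n-1}, s_0..s_{m+1}, y), with
x_i = z i, s_j = z (n+j), y = z (n+m+2). The constraints g_1..g_m are g 0..g (m-1).\<close>
definition fgamma :: "nat \<Rightarrow> nat \<Rightarrow> nat \<Rightarrow> ((nat \<Rightarrow> nat) \<Rightarrow> real) \<Rightarrow> (nat \<Rightarrow> (nat \<Rightarrow> nat) \<Rightarrow> real)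
    \<Rightarrow> real \<Rightarrow> (nat \<Rightarrow> real) \<Rightarrow> real \<Rightarrow> real \<Rightarrow> (nat \<Rightarrow> real) \<Rightarrow> real" where
  "fgamma n m d p g R \<eta> \<beta> \<gamma> z =
     (let y = z (n + m + 2); s = (\<lambda>j. z (n + j)) in
       (\<gamma> * y ^ (2*d) - homog n (2*d) p (n + m + 2) z - (s 0)\<^sup>2 * y ^ (2*d - 2))\<^sup>2
     + (\<Sum>i<m. (homog n (2*d) (g i) (n + m + 2) z - (s (Suc i))\<^sup>2 * y ^ (2*d - 2))\<^sup>2)
     + ((R + (\<Sum>i<m. \<eta> i) + \<beta> + \<gamma>) ^ d * y ^ (2*d)
         - ((\<Sum>i<n. (z i)\<^sup>2) + (\<Sum>j\<le>m. (s j)\<^sup>2)) ^ d - (s (m + 1)) ^ (2*d))\<^sup>2)"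

end

theory Submission
  imports Defs
begin

lemma finite_hexps: "finite (hexps n k)"
proof -
  have "hexps n k \<subseteq> {f. \<forall>x. (x \<in> {..<n} \<longrightarrow> f x \<in> {..k}) \<and> (x \<notin> {..<n} \<longrightarrow> f x = 0)}"
  proof
    fix \<alpha> assume a: "\<alpha> \<in> hexps n k"
    have "\<alpha> i \<le> k" if "i < n" for i
      using a that member_le_sum[of i "{..<n}" \<alpha>] unfolding hexps_def tdeg_def by auto
    then show "\<alpha> \<in> {f. \<forall>x. (x \<in> {..<n} \<longrightarrow> f x \<in> {..k}) \<and> (x \<notin> {..<n} \<longrightarrow> f x = 0)}"
      using a unfolding hexps_def by auto
  qed
  moreover have "finite {f::nat\<Rightarrow>nat. \<forall>x. (x \<in> {..<n} \<longrightarrow> f x \<in> {..k}) \<and> (x \<notin> {..<n} \<longrightarrow> f x = 0)}"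
    by (rule finite_set_of_finite_funs) auto
  ultimately show ?thesis by (rule finite_subset)
qed

lemma is_form_deg: "is_form n k f \<Longrightarrow> k = k' \<Longrightarrow> is_form n k' f" by simp

lemma is_form_0: "is_form n k (\<lambda>_. 0)"
  unfolding is_form_def by (rule exI[of _ "\<lambda>_. 0"]) simp

lemma is_form_add: "is_form n k f \<Longrightarrow> is_form n k g \<Longrightarrow> is_form n k (\<lambda>z. f z + g z)"
  unfolding is_form_def
  apply clarify
  subgoal for c e by (rule exI[of _ "\<lambda>a. c a + e a"]) (simp add: distrib_right sum.distrib)
  done

lemma is_form_scale: "is_form n k f \<Longrightarrow> is_form n k (\<lambda>z. a * f z)"
  unfolding is_form_def
  apply clarify
  subgoal for c by (rule exI[of _ "\<lambda>x. a * c x"]) (simp add: sum_distrib_left mult.assoc)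
  done

lemma is_form_diff: "is_form n k f \<Longrightarrow> is_form n k g \<Longrightarrow> is_form n k (\<lambda>z. f z - g z)"
  using is_form_add[of n k f "\<lambda>z. (-1) * g z"] is_form_scale[of n k g "-1"] by simp

lemma is_form_sum: "(\<And>i. i \<in> A \<Longrightarrow> is_form n k (f i)) \<Longrightarrow> is_form n k (\<lambda>z. \<Sum>i\<in>A. f i z)"
proof -
  have "finite A \<Longrightarrow> (\<forall>i\<in>A. is_form n k (f i)) \<Longrightarrow> is_form n k (\<lambda>z. \<Sum>i\<in>A. f i z)"
    by (induction A rule: finite_induct) (auto intro: is_form_0 is_form_add)
  moreover assume "\<And>i. i \<in> A \<Longrightarrow> is_form n k (f i)"
  ultimately show ?thesis by (cases "finite A") (auto simp: is_form_0)
qed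

lemma monom_add: "monom n (\<lambda>i. a i + b i) x = monom n a x * monom n b x"
  unfolding monom_def by (simp add: power_add prod.distrib)

lemma is_form_mult:
  assumes "is_form n a f" "is_form n b g"
  shows "is_form n (a + b) (\<lambda>z. f z * g z)"
proof -
  obtain c where c: "\<And>x. f x = (\<Sum>\<alpha>\<in>hexps n a. c \<alpha> * monom n \<alpha> x)"
    using assms(1) unfolding is_form_def by blast
  obtain e where e: "\<And>x. g x = (\<Sum>\<alpha>\<in>hexps n b. e \<alpha> * monom n \<alpha> x)"
    using assms(2) unfolding is_form_def by blast
  define S where "S = hexps n a \<times> hexps n b"
  define G where "G = (\<lambda>p::(nat\<Rightarrow>nat)\<times>(nat\<Rightarrow>nat). (\<lambda>i. fst p i + snd p i))"
  define w where "w = (\<lambda>p::(nat\<Rightarrow>nat)\<times>(nat\<Rightarrow>nat). c (fst p) * e (snd p))"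
  define C where "C = (\<lambda>\<gamma>. \<Sum>p\<in>{p. p \<in> S \<and> G p = \<gamma>}. w p)"
  have fS: "finite S" unfolding S_def by (simp add: finite_hexps)
  have GS: "G ` S \<subseteq> hexps n (a + b)"
    unfolding S_def G_def hexps_def tdeg_def by (auto simp: sum.distrib)
  show ?thesis unfolding is_form_def
  proof (rule exI[of _ C], rule allI)
    fix x
    have "f x * g x = (\<Sum>p\<in>S. w p * monom n (G p) x)"
      unfolding c e S_def sum_product sum.cartesian_product w_def G_def monom_add
      by (rule sum.cong) (auto simp: algebra_simps)
    also have "\<dots> = (\<Sum>\<gamma>\<in>hexps n (a+b). \<Sum>p\<in>{p. p \<in> S \<and> G p = \<gamma>}. w p * monom n (G p) x)"
      by (rule sum.group[symmetric, OF fS finite_hexps GS])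
    also have "\<dots> = (\<Sum>\<gamma>\<in>hexps n (a+b). C \<gamma> * monom n \<gamma> x)"
      unfolding C_def sum_distrib_right
      by (rule sum.cong, simp, rule sum.cong) auto
    finally show "f x * g x = (\<Sum>\<gamma>\<in>hexps n (a+b). C \<gamma> * monom n \<gamma> x)" .
  qed
qed

lemma hexps_0: "hexps n 0 = {\<lambda>_. 0}"
  unfolding hexps_def tdeg_def by (auto simp: fun_eq_iff) (metis lessThan_iff not_le)

lemma is_form_const: "is_form n 0 (\<lambda>_. a)"
  unfolding is_form_def hexps_0 by (rule exI[of _ "\<lambda>_. a"]) (simp add: monom_def)

lemma is_form_var:
  assumes "i < n" shows "is_form n 1 (\<lambda>z. z i)"
proof -
  define u where "u = (\<lambda>j::nat. if j = i then 1::nat else 0)"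
  have uh: "u \<in> hexps n 1" using assms unfolding u_def hexps_def tdeg_def by auto
  have mu: "monom n u x = x i" for x
  proof -
    have "monom n u x = (\<Prod>j<n. if j = i then x j else 1)"
      unfolding monom_def u_def by (rule prod.cong) auto
    also have "\<dots> = x i" using assms by (subst prod.delta) auto
    finally show ?thesis .
  qed
  show ?thesis unfolding is_form_def
  proof (rule exI[of _ "\<lambda>a. if a = u then 1 else 0"], rule allI)
    fix x
    have "(\<Sum>\<alpha>\<in>hexps n 1. (if \<alpha> = u then 1 else 0) * monom n \<alpha> x)
        = (\<Sum>\<alpha>\<in>hexps n 1. if \<alpha> = u then monom n \<alpha> x else 0)"
      by (rule sum.cong) auto
    also have "\<dots> = x i" using uh mu by (subst sum.delta[OF finite_hexps]) auto
    finally show "x i = (\<Sum>\<alpha>\<in>hexps n 1. (if \<alpha> = u then 1 else 0) * monom n \<alpha> x)" by simp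
  qed
qed

lemma is_form_pow: "is_form n k f \<Longrightarrow> is_form n (j * k) (\<lambda>z. f z ^ j)"
proof (induction j)
  case 0 then show ?case using is_form_const[of n 1] by simp
next
  case (Suc j)
  then show ?case using is_form_mult[OF Suc.prems Suc.IH[OF Suc.prems]] by simp
qed

lemma is_form_prod: "finite A \<Longrightarrow> (\<And>i. i \<in> A \<Longrightarrow> is_form n (a i) (f i))
   \<Longrightarrow> is_form n (\<Sum>i\<in>A. a i) (\<lambda>z. \<Prod>i\<in>A. f i z)"
proof (induction A rule: finite_induct)
  case empty then show ?case using is_form_const[of n 1] by simp
next
  case (insert x F)
  then show ?case using is_form_mult[of n "a x" "f x" "sum a F" "\<lambda>z. \<Prod>i\<in>F. f i z"] by simp
qed

lemma form_repr: "is_form n k f \<Longrightarrow> \<exists>c. f = (\<lambda>x. \<Sum>\<alpha>\<in>hexps n k. c \<alpha> * monom n \<alpha> x)"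
  unfolding is_form_def by auto

lemma form_local: "is_form n k f \<Longrightarrow> (\<And>i. i < n \<Longrightarrow> z i = w i) \<Longrightarrow> f z = f w"
  by (auto dest!: form_repr simp: monom_def)

lemma monom_scale: "monom n \<alpha> (\<lambda>i. t * z i) = t ^ tdeg n \<alpha> * monom n \<alpha> z"
  unfolding monom_def tdeg_def by (simp add: power_mult_distrib prod.distrib power_sum)

lemma form_homog: "is_form n k f \<Longrightarrow> f (\<lambda>i. t * z i) = t ^ k * f z"
  by (auto dest!: form_repr simp: monom_scale sum_distrib_left hexps_def intro!: sum.cong)

lemma form_cont: "is_form n k f \<Longrightarrow> continuous_on UNIV f"
  by (auto dest!: form_repr simp: monom_def intro!: continuous_intros)

lemma is_form_var_pow: "i < n \<Longrightarrow> is_form n k (\<lambda>z. z i ^ k)"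
  using is_form_pow[OF is_form_var, of i n k] by simp

lemma homog_form:
  assumes "deg_le n k c" "n \<le> N" "yi < N"
  shows "is_form N k (homog n k c yi)"
proof -
  have "is_form N k (\<lambda>z. c \<alpha> * monom n \<alpha> z * z yi ^ (k - tdeg n \<alpha>))" if "\<alpha> \<in> {\<alpha>. c \<alpha> \<noteq> 0}" for \<alpha>
  proof -
    have td: "tdeg n \<alpha> \<le> k" using assms(1) that unfolding deg_le_def by auto
    have m: "is_form N (tdeg n \<alpha>) (monom n \<alpha>)"
      unfolding monom_def[abs_def] tdeg_def
      by (rule is_form_prod) (use assms(2) in \<open>auto intro: is_form_var_pow\<close>)
    have "is_form N (tdeg n \<alpha> + (k - tdeg n \<alpha>)) (\<lambda>z. monom n \<alpha> z * z yi ^ (k - tdeg n \<alpha>))"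
      by (rule is_form_mult[OF m is_form_var_pow[OF assms(3)]])
    then have "is_form N k (\<lambda>z. monom n \<alpha> z * z yi ^ (k - tdeg n \<alpha>))" using td by simp
    from is_form_scale[OF this, of "c \<alpha>"] show ?thesis by (simp add: mult.assoc)
  qed
  then show ?thesis unfolding homog_def[abs_def] by (rule is_form_sum)
qed

lemma fgamma_form:
  assumes d1: "d \<ge> 1" and dp: "deg_le n (2*d) p" and dg: "\<forall>i<m. deg_le n (2*d) (g i)"
  shows "is_form (n+m+3) (2*(2*d)) (fgamma n m d p g R \<eta> \<beta> \<gamma>)"
proof -
  let ?N = "n+m+3"
  have yp: "is_form ?N k (\<lambda>z. z (n+m+2) ^ k)" for k by (rule is_form_var_pow) simp
  have sp2: "is_form ?N (2*d) (\<lambda>z. z (n+j) ^ 2 * z (n+m+2) ^ (2*d-2))" if "j \<le> m+1" for j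
  proof -
    have "is_form ?N (2 + (2*d-2)) (\<lambda>z. z (n+j) ^ 2 * z (n+m+2) ^ (2*d-2))"
      by (rule is_form_mult[OF is_form_var_pow yp]) (use that in simp)
    moreover have "2 + (2*d-2) = 2*d" using d1 by simp
    ultimately show ?thesis by simp
  qed
  have hp: "is_form ?N (2*d) (homog n (2*d) p (n+m+2))" by (rule homog_form[OF dp]) auto
  have hg: "is_form ?N (2*d) (homog n (2*d) (g i) (n+m+2))" if "i < m" for i
    by (rule homog_form) (use dg that in auto)
  have t1: "is_form ?N (2*d) (\<lambda>z. \<gamma> * z (n+m+2) ^ (2*d) - homog n (2*d) p (n+m+2) z - z n ^ 2 * z (n+m+2) ^ (2*d-2))"
    by (intro is_form_diff is_form_scale yp hp) (use sp2[of 0] in simp)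
  have t2: "is_form ?N (2*d) (\<lambda>z. homog n (2*d) (g i) (n+m+2) z - z (n + Suc i) ^ 2 * z (n+m+2) ^ (2*d-2))"
    if "i < m" for i
    by (intro is_form_diff hg sp2) (use that in auto)
  have q: "is_form ?N 2 (\<lambda>z. (\<Sum>i<n. (z i)\<^sup>2) + (\<Sum>j\<le>m. (z (n+j))\<^sup>2))"
    by (intro is_form_add is_form_sum is_form_var_pow) auto
  have t3: "is_form ?N (2*d) (\<lambda>z. (R + (\<Sum>i<m. \<eta> i) + \<beta> + \<gamma>) ^ d * z (n+m+2) ^ (2*d)
         - ((\<Sum>i<n. (z i)\<^sup>2) + (\<Sum>j\<le>m. (z (n+j))\<^sup>2)) ^ d - z (n + (m + 1)) ^ (2*d))"
    by (intro is_form_diff is_form_scale yp is_form_deg[OF is_form_pow[OF q]] is_form_var_pow) auto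
  have sq: "is_form ?N (2*(2*d)) (\<lambda>z. h z ^ 2)" if "is_form ?N (2*d) h" for h
    using is_form_pow[OF that, of 2] by simp
  have "is_form ?N (2*(2*d)) (\<lambda>z. (\<gamma> * z (n+m+2) ^ (2*d) - homog n (2*d) p (n+m+2) z - z n ^ 2 * z (n+m+2) ^ (2*d-2))\<^sup>2
     + (\<Sum>i<m. (homog n (2*d) (g i) (n+m+2) z - z (n + Suc i) ^ 2 * z (n+m+2) ^ (2*d-2))\<^sup>2)
     + ((R + (\<Sum>i<m. \<eta> i) + \<beta> + \<gamma>) ^ d * z (n+m+2) ^ (2*d)
         - ((\<Sum>i<n. (z i)\<^sup>2) + (\<Sum>j\<le>m. (z (n+j))\<^sup>2)) ^ d - z (n + (m + 1)) ^ (2*d))\<^sup>2)"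
    by (intro is_form_add is_form_sum sq t1 t2 t3) auto
  moreover have "fgamma n m d p g R \<eta> \<beta> \<gamma> = (\<lambda>z. (\<gamma> * z (n+m+2) ^ (2*d) - homog n (2*d) p (n+m+2) z - z n ^ 2 * z (n+m+2) ^ (2*d-2))\<^sup>2
     + (\<Sum>i<m. (homog n (2*d) (g i) (n+m+2) z - z (n + Suc i) ^ 2 * z (n+m+2) ^ (2*d-2))\<^sup>2)
     + ((R + (\<Sum>i<m. \<eta> i) + \<beta> + \<gamma>) ^ d * z (n+m+2) ^ (2*d)
         - ((\<Sum>i<n. (z i)\<^sup>2) + (\<Sum>j\<le>m. (z (n+j))\<^sup>2)) ^ d - z (n + (m + 1)) ^ (2*d))\<^sup>2)"
    by (rule ext) (simp add: fgamma_def Let_def)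
  ultimately show ?thesis by simp
qed

definition sphereN :: "nat \<Rightarrow> (nat \<Rightarrow> real) set" where
  "sphereN N = {z. (\<forall>i. z i \<in> (if i < N then cball 0 1 else {0})) \<and> (\<Sum>i<N. (z i)\<^sup>2) = 1}"

lemma compact_sphereN: "compact (sphereN N)"
proof -
  let ?S = "\<lambda>i::nat. (if i < N then cball (0::real) 1 else {0})"
  have "compactin (product_topology (\<lambda>i. euclidean) UNIV) (PiE UNIV ?S)"
    by (subst compactin_PiE) auto
  then have c: "compact (PiE UNIV ?S)" by (simp add: euclidean_product_topology)
  have cl: "closed {z::nat\<Rightarrow>real. (\<Sum>i<N. (z i)\<^sup>2) = 1}"
    by (rule closed_Collect_eq) (auto intro!: continuous_intros)
  have "sphereN N = PiE UNIV ?S \<inter> {z. (\<Sum>i<N. (z i)\<^sup>2) = 1}"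
    unfolding sphereN_def PiE_UNIV_domain by blast
  then show ?thesis using compact_Int_closed[OF c cl] by simp
qed

lemma posdef_perturb:
  assumes F: "is_form N k F" and pF: "pos_def N F" and s: "is_form N k s" and N: "N > 0"
  shows "\<exists>\<epsilon>>0. pos_def N (\<lambda>z. F z - \<epsilon> * s z)"
proof -
  let ?C = "sphereN N"
  have "(\<Sum>i<N. ((\<lambda>i. if i = 0 then 1 else 0) i)\<^sup>2) = (\<Sum>i<N. if i = 0 then (1::real) else 0)"
    by (rule sum.cong) auto
  also have "\<dots> = 1" using N by simp
  finally have ne: "(\<lambda>i. if i = 0 then 1 else 0) \<in> ?C" using N unfolding sphereN_def
    by auto
  then have ne': "?C \<noteq> {}" by auto
  obtain z0 where z0: "z0 \<in> ?C" "\<And>y. y \<in> ?C \<Longrightarrow> F z0 \<le> F y"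
    using continuous_attains_inf[OF compact_sphereN ne' continuous_on_subset[OF form_cont[OF F]]] by auto
  obtain z1 where z1: "z1 \<in> ?C" "\<And>y. y \<in> ?C \<Longrightarrow> s y \<le> s z1"
    using continuous_attains_sup[OF compact_sphereN ne' continuous_on_subset[OF form_cont[OF s]]] by auto
  have "\<exists>i<N. z0 i \<noteq> 0"
  proof (rule ccontr)
    assume "\<not> ?thesis"
    then have "(\<Sum>i<N. (z0 i)\<^sup>2) = 0" by simp
    then show False using z0(1) unfolding sphereN_def by simp
  qed
  then have F0: "F z0 > 0" using pF unfolding pos_def_def by blast
  define M where "M = \<bar>s z1\<bar> + 1"
  define \<epsilon> where "\<epsilon> = F z0 / (2 * M)"
  have M: "M > 0" unfolding M_def by simp
  have ep: "\<epsilon> > 0" unfolding \<epsilon>_def using F0 M by simp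
  have key: "F w - \<epsilon> * s w > 0" if w: "w \<in> ?C" for w
  proof -
    have "\<epsilon> * s w \<le> \<epsilon> * M" using z1(2)[OF w] ep unfolding M_def
      by (intro mult_left_mono) auto
    also have "\<dots> = F z0 / 2" unfolding \<epsilon>_def using M by simp
    also have "\<dots> < F w" using z0(2)[OF w] F0 by simp
    finally show ?thesis by simp
  qed
  show ?thesis
  proof (rule exI[of _ \<epsilon>], intro conjI ep, unfold pos_def_def, intro allI impI)
    fix z :: "nat \<Rightarrow> real" assume "\<exists>i<N. z i \<noteq> 0"
    then obtain j where j: "j < N" "z j \<noteq> 0" by auto
    define \<rho> where "\<rho> = sqrt (\<Sum>i<N. (z i)\<^sup>2)"
    have "(z j)\<^sup>2 \<le> (\<Sum>i<N. (z i)\<^sup>2)" using j by (intro member_le_sum) auto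
    moreover have "(z j)\<^sup>2 > 0" using j by simp
    ultimately have "(\<Sum>i<N. (z i)\<^sup>2) > 0" by linarith
    then have rpos: "\<rho> > 0" unfolding \<rho>_def by simp
    define w where "w = (\<lambda>i. if i < N then z i / \<rho> else 0)"
    have wC: "w \<in> ?C"
    proof -
      have "\<bar>z i\<bar> \<le> \<rho>" if "i < N" for i
      proof -
        have "(z i)\<^sup>2 \<le> (\<Sum>i<N. (z i)\<^sup>2)" using that by (intro member_le_sum) auto
        then have "sqrt ((z i)\<^sup>2) \<le> \<rho>" unfolding \<rho>_def by (rule real_sqrt_le_mono)
        then show ?thesis by simp
      qed
      then have "\<forall>i. w i \<in> (if i < N then cball 0 1 else {0})"
        unfolding w_def using rpos by (auto simp: abs_divide divide_le_eq_1)
      moreover have "(\<Sum>i<N. (w i)\<^sup>2) = (\<Sum>i<N. (z i)\<^sup>2) / \<rho>\<^sup>2"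
        unfolding w_def by (simp add: power_divide sum_divide_distrib)
      moreover have "\<rho>\<^sup>2 = (\<Sum>i<N. (z i)\<^sup>2)" unfolding \<rho>_def by (simp add: sum_nonneg)
      ultimately show ?thesis unfolding sphereN_def using rpos by auto
    qed
    have loc: "\<And>i. i < N \<Longrightarrow> z i = \<rho> * w i" unfolding w_def using rpos by simp
    have "F z = \<rho> ^ k * F w"
      using form_local[OF F loc] form_homog[OF F] by simp
    moreover have "s z = \<rho> ^ k * s w"
      using form_local[OF s loc] form_homog[OF s] by simp
    ultimately have "F z - \<epsilon> * s z = \<rho> ^ k * (F w - \<epsilon> * s w)" by (simp add: algebra_simps)
    then show "F z - \<epsilon> * s z > 0" using key[OF wC] rpos by simp
  qed
qed

lemma homog_at1:
  assumes "z yi = 1" "\<And>i. i < n \<Longrightarrow> z i = x i"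
  shows "homog n k c yi z = peval n c x"
  unfolding homog_def peval_def using assms by (auto simp: monom_def intro!: sum.cong prod.cong)

lemma homog_scale:
  assumes "deg_le n k c" "\<And>i. i < n \<Longrightarrow> z i = y * x i" "z yi = y"
  shows "homog n k c yi z = y ^ k * peval n c x"
  unfolding homog_def peval_def sum_distrib_left
proof (rule sum.cong)
  fix \<alpha> assume a: "\<alpha> \<in> {\<alpha>. c \<alpha> \<noteq> 0}"
  have td: "tdeg n \<alpha> \<le> k" using assms(1) a unfolding deg_le_def by auto
  have "monom n \<alpha> z = monom n \<alpha> (\<lambda>i. y * x i)" unfolding monom_def using assms(2) by auto
  also have "\<dots> = y ^ tdeg n \<alpha> * monom n \<alpha> x" by (rule monom_scale)
  finally have "monom n \<alpha> z * z yi ^ (k - tdeg n \<alpha>) = y ^ (tdeg n \<alpha> + (k - tdeg n \<alpha>)) * monom n \<alpha> x"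
    using assms(3) by (simp add: power_add)
  also have "tdeg n \<alpha> + (k - tdeg n \<alpha>) = k" using td by simp
  finally show "c \<alpha> * monom n \<alpha> z * z yi ^ (k - tdeg n \<alpha>) = y ^ k * (c \<alpha> * monom n \<alpha> x)"
    by (simp add: algebra_simps)
qed simp

lemma fgamma_expand: "fgamma n m d p g R \<eta> \<beta> \<gamma> z =
   (\<gamma> * z (n+m+2) ^ (2*d) - homog n (2*d) p (n+m+2) z - (z n)\<^sup>2 * z (n+m+2) ^ (2*d-2))\<^sup>2
     + (\<Sum>i<m. (homog n (2*d) (g i) (n+m+2) z - (z (n + Suc i))\<^sup>2 * z (n+m+2) ^ (2*d-2))\<^sup>2)
     + ((R + (\<Sum>i<m. \<eta> i) + \<beta> + \<gamma>) ^ d * z (n+m+2) ^ (2*d)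
         - ((\<Sum>i<n. (z i)\<^sup>2) + (\<Sum>j\<le>m. (z (n+j))\<^sup>2)) ^ d - z (n + (m + 1)) ^ (2*d))\<^sup>2"
  by (simp add: fgamma_def Let_def)

lemma fgamma_zero:
  assumes d1: "d \<ge> 1"
    and gx: "\<forall>i<m. peval n (g i) x \<ge> 0"
    and Rx: "(\<Sum>i<n. (x i)\<^sup>2) \<le> R"
    and ex: "\<forall>i<m. peval n (g i) x \<le> \<eta> i"
    and bx: "- peval n p x \<le> \<beta>"
    and px: "peval n p x \<le> \<gamma>"
  shows "\<exists>z. z (n+m+2) = 1 \<and> fgamma n m d p g R \<eta> \<beta> \<gamma> z = 0"
proof -
  define B where "B = (\<Sum>i<n. (x i)\<^sup>2) + (\<gamma> - peval n p x) + (\<Sum>i<m. peval n (g i) x)"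
  define A where "A = R + (\<Sum>i<m. \<eta> i) + \<beta> + \<gamma>"
  have B0: "0 \<le> B" unfolding B_def using gx px by (auto intro!: add_nonneg_nonneg sum_nonneg)
  have BA: "B \<le> A" unfolding B_def A_def using Rx bx sum_mono[of "{..<m}" "\<lambda>i. peval n (g i) x" \<eta>] ex
    by auto
  have AB: "B ^ d \<le> A ^ d" by (rule power_mono[OF BA B0])
  define z where "z = (\<lambda>i. if i < n then x i else if i = n then sqrt (\<gamma> - peval n p x)
      else if i \<le> n + m then sqrt (peval n (g (i - n - 1)) x)
      else if i = n + m + 1 then root (2*d) (A ^ d - B ^ d) else if i = n+m+2 then 1 else 0)"
  have zy: "z (n+m+2) = 1" unfolding z_def by simp
  have zx: "\<And>i. i < n \<Longrightarrow> z i = x i" unfolding z_def by simp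
  have z0: "(z n)\<^sup>2 = \<gamma> - peval n p x" unfolding z_def using px by simp
  have zg: "(z (n + Suc i))\<^sup>2 = peval n (g i) x" if "i < m" for i
    unfolding z_def using that gx by auto
  have zs: "(\<Sum>j\<le>m. (z (n+j))\<^sup>2) = (\<gamma> - peval n p x) + (\<Sum>i<m. peval n (g i) x)"
    unfolding sum.atMost_shift using z0 zg by simp
  have zl: "z (n + (m+1)) ^ (2*d) = A ^ d - B ^ d" unfolding z_def using d1 AB by simp
  have "fgamma n m d p g R \<eta> \<beta> \<gamma> z = 0"
  proof -
    have h: "homog n (2*d) c (n+m+2) z = peval n c x" for c by (rule homog_at1[where n=n and x=x]) (use zy zx in auto)
    have sx: "(\<Sum>i<n. (z i)\<^sup>2) = (\<Sum>i<n. (x i)\<^sup>2)" using zx by simp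
    show ?thesis
      unfolding fgamma_expand zy h zs zl sx
      using z0 zg by (simp add: A_def B_def add.assoc)
  qed
  then show ?thesis using zy by blast
qed

lemma fgamma_nonneg: "fgamma n m d p g R \<eta> \<beta> \<gamma> z \<ge> 0"
  unfolding fgamma_def Let_def by (intro add_nonneg_nonneg sum_nonneg) auto

lemma fgamma_posdef:
  assumes d1: "d \<ge> 1" and dp: "deg_le n (2*d) p" and dg: "\<forall>i<m. deg_le n (2*d) (g i)"
    and H: "\<And>x. (\<forall>i\<ge>n. x i = 0) \<Longrightarrow> (\<forall>i<m. peval n (g i) x \<ge> 0) \<Longrightarrow> \<gamma> < peval n p x"
  shows "pos_def (n+m+3) (fgamma n m d p g R \<eta> \<beta> \<gamma>)"
  unfolding pos_def_def
proof (intro allI impI)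
  fix z :: "nat \<Rightarrow> real" assume nz: "\<exists>i<n+m+3. z i \<noteq> 0"
  define y where "y = z (n+m+2)"
  define T1 where "T1 = \<gamma> * y ^ (2*d) - homog n (2*d) p (n+m+2) z - (z n)\<^sup>2 * y ^ (2*d-2)"
  define T2 where "T2 = (\<lambda>i. homog n (2*d) (g i) (n+m+2) z - (z (n + Suc i))\<^sup>2 * y ^ (2*d-2))"
  define T3 where "T3 = (R + (\<Sum>i<m. \<eta> i) + \<beta> + \<gamma>) ^ d * y ^ (2*d)
         - ((\<Sum>i<n. (z i)\<^sup>2) + (\<Sum>j\<le>m. (z (n+j))\<^sup>2)) ^ d - z (n + (m + 1)) ^ (2*d)"
  have f: "fgamma n m d p g R \<eta> \<beta> \<gamma> z = T1\<^sup>2 + (\<Sum>i<m. (T2 i)\<^sup>2) + T3\<^sup>2"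
    unfolding fgamma_def Let_def T1_def T2_def T3_def y_def by simp
  show "fgamma n m d p g R \<eta> \<beta> \<gamma> z > 0"
  proof (rule ccontr)
    assume "\<not> ?thesis"
    then have le: "T1\<^sup>2 + (\<Sum>i<m. (T2 i)\<^sup>2) + T3\<^sup>2 \<le> 0" unfolding f by simp
    have s0: "(\<Sum>i<m. (T2 i)\<^sup>2) \<ge> 0" by (intro sum_nonneg) auto
    have "T1\<^sup>2 = 0" using le s0 by (smt (verit) zero_le_power2)
    then have e1: "T1 = 0" by simp
    have "T3\<^sup>2 = 0" using le s0 by (smt (verit) zero_le_power2)
    then have e3: "T3 = 0" by simp
    have "(\<Sum>i<m. (T2 i)\<^sup>2) = 0" using le s0 by (smt (verit) zero_le_power2)
    then have e2: "\<forall>i<m. T2 i = 0" by (subst (asm) sum_nonneg_eq_0_iff) auto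
    show False
    proof (cases "y = 0")
      case True
      define Q where "Q = (\<Sum>i<n. (z i)\<^sup>2) + (\<Sum>j\<le>m. (z (n+j))\<^sup>2)"
      have Q0: "Q \<ge> 0" unfolding Q_def by (intro add_nonneg_nonneg sum_nonneg) auto
      have z2: "y ^ (2*d) = 0" using d1 True by simp
      have "Q ^ d + z (n + (m + 1)) ^ (2*d) = 0" using e3 unfolding T3_def Q_def z2 by simp
      moreover have "z (n + (m + 1)) ^ (2*d) \<ge> 0" by (simp add: power_mult)
      moreover have "Q ^ d \<ge> 0" using Q0 by simp
      ultimately have "Q ^ d = 0" "z (n + (m + 1)) ^ (2*d) = 0" by linarith+
      then have Qz: "Q = 0" and zl: "z (n + (m+1)) = 0" by auto
      have s1: "(\<Sum>i<n. (z i)\<^sup>2) = 0" and s2: "(\<Sum>j\<le>m. (z (n+j))\<^sup>2) = 0"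
        using Qz unfolding Q_def by (smt (verit) sum_nonneg zero_le_power2)+
      have za: "\<forall>i<n. z i = 0" using s1 by (subst (asm) sum_nonneg_eq_0_iff) auto
      have zb: "\<forall>j\<le>m. z (n+j) = 0" using s2 by (subst (asm) sum_nonneg_eq_0_iff) auto
      from nz obtain i where i: "i < n+m+3" "z i \<noteq> 0" by auto
      show False
      proof (cases "i < n")
        case True then show False using za i by auto
      next
        case False
        then obtain j where j: "i = n + j" by (metis le_add_diff_inverse not_le)
        then show False using zb zl i True y_def
          by (cases "j \<le> m"; cases "j = m+1"; cases "j = m+2") (auto simp: add.assoc)
      qed
    next
      case False
      define x where "x = (\<lambda>i. if i < n then z i / y else 0)"
      have zx: "\<And>i. i < n \<Longrightarrow> z i = y * x i" unfolding x_def using False by simp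
      have hp: "homog n (2*d) p (n+m+2) z = y ^ (2*d) * peval n p x"
        by (rule homog_scale[OF dp zx]) (simp_all add: y_def)
      have hg: "homog n (2*d) (g i) (n+m+2) z = y ^ (2*d) * peval n (g i) x" if "i < m" for i
        by (rule homog_scale[OF _ zx]) (use dg that in \<open>auto simp: y_def\<close>)
      have ypos: "y ^ (2*d) > 0" using False by (simp add: power_mult)
      have yy: "y ^ (2*d) = y\<^sup>2 * y ^ (2*d-2)"
      proof -
        have "2*d = 2 + (2*d-2)" using d1 by simp
        then show ?thesis by (metis power_add)
      qed
      have ypos2: "y ^ (2*d-2) > 0"
      proof -
        have "2*d-2 = 2*(d-1)" by simp
        then show ?thesis using False by (simp only: power_mult) simp
      qed
      have g0: "peval n (g i) x \<ge> 0" if "i < m" for i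
      proof -
        have "y ^ (2*d) * peval n (g i) x = (z (n + Suc i))\<^sup>2 * y ^ (2*d-2)"
          using e2 that hg[OF that] unfolding T2_def by auto
        then have "y\<^sup>2 * peval n (g i) x = (z (n + Suc i))\<^sup>2" using ypos2 False unfolding yy by simp
        moreover have "y\<^sup>2 > 0" using False by simp
        ultimately show ?thesis by (metis zero_le_power2 zero_le_mult_iff not_less)
      qed
      have "y ^ (2*d) * (\<gamma> - peval n p x) = (z n)\<^sup>2 * y ^ (2*d-2)"
        using e1 hp unfolding T1_def by (simp add: algebra_simps)
      then have "y\<^sup>2 * (\<gamma> - peval n p x) = (z n)\<^sup>2" using ypos2 False unfolding yy by simp
      moreover have "y\<^sup>2 > 0" using False by simp
      ultimately have "\<gamma> - peval n p x \<ge> 0" by (metis zero_le_power2 zero_le_mult_iff not_less)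
      moreover have "\<gamma> < peval n p x" by (rule H) (use g0 in \<open>auto simp: x_def\<close>)
      ultimately show False by simp
    qed
  qed
qed

lemma deg_le_mono: "deg_le n k c \<Longrightarrow> k \<le> k' \<Longrightarrow> deg_le n k' c"
  unfolding deg_le_def by force

theorem theorem2p2:
  fixes n m d :: nat
    and p :: "(nat \<Rightarrow> nat) \<Rightarrow> real"
    and g :: "nat \<Rightarrow> (nat \<Rightarrow> nat) \<Rightarrow> real"
    and S :: "(nat \<Rightarrow> real) set"
    and R \<beta> :: real and \<eta> :: "nat \<Rightarrow> real"
    and K :: "nat \<Rightarrow> nat \<Rightarrow> nat \<Rightarrow> ((nat \<Rightarrow> real) \<Rightarrow> real) set"
    and s :: "nat \<Rightarrow> nat \<Rightarrow> (nat \<Rightarrow> real) \<Rightarrow> real"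
    and N D :: nat and pstar :: ereal and l :: "nat \<Rightarrow> ereal"
  assumes p_poly: "\<exists>k. deg_le n k p"
    and g_poly: "\<forall>i<m. \<exists>k. deg_le n k (g i)"
    and S_def: "S = {x. (\<forall>i\<ge>n. x i = 0) \<and> (\<forall>i<m. peval n (g i) x \<ge> 0)}"
    and pstar_def: "pstar = (INF x\<in>S. ereal (peval n p x))"
    and d_def: "d = (LEAST d. d \<ge> 1 \<and> deg_le n (2*d) p \<and> (\<forall>i<m. deg_le n (2*d) (g i)))"
    and R_pos: "R > 0" and R_bound: "\<forall>x\<in>S. (\<Sum>i<n. (x i)\<^sup>2) \<le> R"
    and eta_bound: "\<forall>i<m. \<forall>x\<in>S. peval n (g i) x \<le> \<eta> i"
    and beta_bound: "\<forall>x\<in>S. - peval n p x \<le> \<beta>"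
    and N_def: "N = n + m + 3" and D_def: "D = 2 * d"
    and Ka: "\<forall>n' d' r. n' > 0 \<longrightarrow> d' > 0 \<longrightarrow> K r n' d' \<subseteq> nonneg_forms n' (2*d')"
    and sa: "\<forall>n' d'. n' > 0 \<longrightarrow> d' > 0 \<longrightarrow> s n' d' \<in> K 0 n' d' \<and> pos_def n' (s n' d')"
    and Kb: "\<forall>n' d' q. n' > 0 \<longrightarrow> d' > 0 \<longrightarrow> is_form n' (2*d') q \<longrightarrow> pos_def n' q
               \<longrightarrow> (\<exists>r. q \<in> K r n' d')"
    and Kc: "\<forall>n' d' r. n' > 0 \<longrightarrow> d' > 0 \<longrightarrow> K r n' d' \<subseteq> K (Suc r) n' d'"
    and Kd: "\<forall>n' d' r q \<epsilon>. n' > 0 \<longrightarrow> d' > 0 \<longrightarrow> q \<in> K r n' d' \<longrightarrow> 0 \<le> \<epsilon> \<longrightarrow> \<epsilon> \<le> 1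
               \<longrightarrow> (\<lambda>z. q z + \<epsilon> * s n' d' z) \<in> K r n' d'"
    and l_def: "\<forall>r. l r = Sup {ereal \<gamma> | \<gamma>.
               (\<lambda>z. fgamma n m d p g R \<eta> \<beta> \<gamma> z - (1 / real r) * s N D z) \<in> K r N D}"
  shows "(\<forall>r\<ge>1. l r \<le> pstar) \<and> (\<forall>r\<ge>1. l r \<le> l (Suc r)) \<and> (\<lambda>r. l (Suc r)) \<longlonglongrightarrow> pstar"
proof -
  obtain kp where kp: "deg_le n kp p" using p_poly by blast
  define kg where "kg = (\<lambda>i. SOME k. deg_le n k (g i))"
  have kg: "\<forall>i<m. deg_le n (kg i) (g i)"
    unfolding kg_def using g_poly by (auto intro: someI_ex)
  define d0 where "d0 = 1 + kp + (\<Sum>i<m. kg i)"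
  have "d0 \<ge> 1 \<and> deg_le n (2*d0) p \<and> (\<forall>i<m. deg_le n (2*d0) (g i))"
  proof (intro conjI allI impI)
    show "d0 \<ge> 1" unfolding d0_def by simp
    show "deg_le n (2*d0) p" by (rule deg_le_mono[OF kp]) (simp add: d0_def)
    fix i assume i: "i < m"
    have ki: "kg i \<le> (\<Sum>i<m. kg i)" using i by (intro member_le_sum) auto
    show "deg_le n (2*d0) (g i)"
      by (rule deg_le_mono[OF kg[rule_format, OF i]]) (use ki in \<open>simp add: d0_def\<close>)
  qed
  then have dprops: "d \<ge> 1 \<and> deg_le n (2*d) p \<and> (\<forall>i<m. deg_le n (2*d) (g i))"
    unfolding d_def by (rule LeastI)
  then have d1: "d \<ge> 1" and dp: "deg_le n (2*d) p" and dg: "\<forall>i<m. deg_le n (2*d) (g i)" by auto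
  have N0: "N > 0" and D0: "D > 0" using d1 by (auto simp: N_def D_def)
  have KN: "K r N D \<subseteq> nonneg_forms N (2*D)" for r using Ka N0 D0 by blast
  have s0: "s N D \<in> K 0 N D" and spd: "pos_def N (s N D)" using sa N0 D0 by auto
  have sform: "is_form N (2*D) (s N D)" and snn: "\<And>z. s N D z \<ge> 0"
    using KN s0 unfolding nonneg_forms_def by auto
  have KcN: "K r N D \<subseteq> K (Suc r) N D" for r using Kc N0 D0 by blast
  have KmN: "r0 \<le> r \<Longrightarrow> K r0 N D \<subseteq> K r N D" for r0 r
    by (rule lift_Suc_mono_le[of "\<lambda>r. K r N D"]) (use KcN in auto)
  have KdN: "q \<in> K r N D \<Longrightarrow> 0 \<le> e \<Longrightarrow> e \<le> 1 \<Longrightarrow> (\<lambda>z. q z + e * s N D z) \<in> K r N D" for q r e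
    using Kd N0 D0 by blast
  define F where "F = (\<lambda>\<gamma>. fgamma n m d p g R \<eta> \<beta> \<gamma>)"
  define L where "L = (\<lambda>r. {ereal \<gamma> | \<gamma>. (\<lambda>z. F \<gamma> z - (1 / real r) * s N D z) \<in> K r N D})"
  have lL: "l r = Sup (L r)" for r using l_def unfolding L_def F_def by simp
  have ub: "l r \<le> pstar" if r: "r \<ge> 1" for r
    unfolding lL
  proof (rule Sup_least)
    fix e assume "e \<in> L r"
    then obtain \<gamma> where e: "e = ereal \<gamma>" and inK: "(\<lambda>z. F \<gamma> z - (1 / real r) * s N D z) \<in> K r N D"
      unfolding L_def by blast
    have nn: "F \<gamma> z - (1 / real r) * s N D z \<ge> 0" for z
      using KN inK unfolding nonneg_forms_def by blast
    have "\<gamma> \<le> peval n p x" if x: "x \<in> S" for x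
    proof (rule ccontr)
      assume "\<not> ?thesis"
      then have px: "peval n p x \<le> \<gamma>" by simp
      have gx: "\<forall>i<m. peval n (g i) x \<ge> 0" using x S_def by auto
      obtain z where zy: "z (n+m+2) = 1" and fz: "F \<gamma> z = 0"
        using fgamma_zero[OF d1 gx _ _ _ px, of R \<eta> \<beta>] R_bound eta_bound beta_bound x
        unfolding F_def by blast
      have "n+m+2 < N" unfolding N_def by simp
      then have "\<exists>i<N. z i \<noteq> 0" using zy by (intro exI[of _ "n+m+2"]) simp
      then have "s N D z > 0" using spd unfolding pos_def_def by blast
      moreover have "1 / real r > 0" using r by simp
      ultimately have "(1 / real r) * s N D z > 0" by simp
      then show False using nn[of z] fz by simp
    qed
    then show "e \<le> pstar" unfolding e pstar_def by (auto intro: INF_greatest)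
  qed
  have mono: "l r \<le> l (Suc r)" if r: "r \<ge> 1" for r
    unfolding lL
  proof (rule Sup_subset_mono, rule subsetI)
    fix e assume "e \<in> L r"
    then obtain \<gamma> where e: "e = ereal \<gamma>" and inK: "(\<lambda>z. F \<gamma> z - (1 / real r) * s N D z) \<in> K r N D"
      unfolding L_def by blast
    have "(\<lambda>z. (F \<gamma> z - (1 / real r) * s N D z) + (1 / real r - 1 / real (Suc r)) * s N D z) \<in> K (Suc r) N D"
    proof -
      have a: "1/real (Suc r) \<le> 1/ real r" using r by (intro divide_left_mono) auto
      have b: "1/real r \<le> 1" using r by simp
      have c: "0 \<le> 1/real (Suc r)" by simp
      show ?thesis by (rule KdN[OF KcN[THEN subsetD, OF inK]]) (use a b c in linarith)+
    qed
    moreover have "(\<lambda>z. (F \<gamma> z - (1 / real r) * s N D z) + (1 / real r - 1 / real (Suc r)) * s N D z)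
        = (\<lambda>z. F \<gamma> z - (1 / real (Suc r)) * s N D z)" by (rule ext) (simp add: algebra_simps)
    ultimately show "e \<in> L (Suc r)" unfolding L_def e by auto
  qed
  have lb: "\<exists>r0. \<forall>r\<ge>r0. ereal \<gamma> \<le> l r" if g: "ereal \<gamma> < pstar" for \<gamma>
  proof -
    have H: "\<gamma> < peval n p x" if "\<forall>i\<ge>n. x i = 0" "\<forall>i<m. peval n (g i) x \<ge> 0" for x
    proof -
      have "x \<in> S" using that S_def by auto
      then have "pstar \<le> ereal (peval n p x)" unfolding pstar_def by (rule INF_lower)
      then have "ereal \<gamma> < ereal (peval n p x)" using g by (rule order_less_le_trans[rotated])
      then show ?thesis by simp
    qed
    have pd: "pos_def N (F \<gamma>)" unfolding F_def N_def
      by (rule fgamma_posdef[OF d1 dp dg]) (use H in auto)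
    have ff: "is_form N (2*D) (F \<gamma>)" unfolding F_def N_def D_def by (rule fgamma_form[OF d1 dp dg])
    obtain \<epsilon> where ep: "\<epsilon> > 0" and pde: "pos_def N (\<lambda>z. F \<gamma> z - \<epsilon> * s N D z)"
      using posdef_perturb[OF ff pd sform N0] by blast
    obtain k where k: "k > 0" "inverse (real k) < \<epsilon>" using ex_inverse_of_nat_less[OF ep] by blast
    define G where "G = (\<lambda>z. F \<gamma> z - (1 / real k) * s N D z)"
    have Gf: "is_form N (2*D) G" unfolding G_def by (intro is_form_diff is_form_scale ff sform)
    have Gp: "pos_def N G" unfolding pos_def_def
    proof (intro allI impI)
      fix z :: "nat \<Rightarrow> real" assume "\<exists>i<N. z i \<noteq> 0"
      then have "F \<gamma> z - \<epsilon> * s N D z > 0" using pde unfolding pos_def_def by blast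
      moreover have "(\<epsilon> - 1 / real k) * s N D z \<ge> 0" using k snn[of z]
        by (intro mult_nonneg_nonneg) (auto simp: field_simps)
      ultimately show "G z > 0" unfolding G_def by (simp add: algebra_simps)
    qed
    obtain r0 where r0: "G \<in> K r0 N D" using Kb N0 D0 Gf Gp by blast
    show ?thesis
    proof (rule exI[of _ "max r0 k"], intro allI impI)
      fix r assume r: "max r0 k \<le> r"
      then have rk: "r \<ge> k" and "r \<ge> r0" by auto
      then have Gr: "G \<in> K r N D" using KmN r0 by blast
      have rpos: "real r > 0" using rk k by simp
      have "(\<lambda>z. G z + (1 / real k - 1 / real r) * s N D z) \<in> K r N D"
      proof -
        have a: "1/real r \<le> 1/ real k" using rk k by (intro divide_left_mono) auto
        have b: "1/real k \<le> 1" using k by simp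
        have c: "0 \<le> 1/real r" by simp
        show ?thesis by (rule KdN[OF Gr]) (use a b c in linarith)+
      qed
      moreover have "(\<lambda>z. G z + (1 / real k - 1 / real r) * s N D z) = (\<lambda>z. F \<gamma> z - (1 / real r) * s N D z)"
        unfolding G_def by (rule ext) (simp add: algebra_simps)
      ultimately have "ereal \<gamma> \<in> L r" unfolding L_def by auto
      then show "ereal \<gamma> \<le> l r" unfolding lL by (rule Sup_upper)
    qed
  qed
  have lim: "(\<lambda>r. l (Suc r)) \<longlonglongrightarrow> pstar"
  proof (rule order_tendstoI)
    fix a assume "a < pstar"
    then obtain \<gamma> where a: "a < ereal \<gamma>" "ereal \<gamma> < pstar" using ereal_dense2 by blast
    obtain r0 where "\<forall>r\<ge>r0. ereal \<gamma> \<le> l r" using lb[OF a(2)] by blast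
    then have "\<forall>r\<ge>r0. a < l (Suc r)" using a(1) le_SucI order_less_le_trans by blast
    then show "\<forall>\<^sub>F r in sequentially. a < l (Suc r)" by (auto simp: eventually_sequentially)
  next
    fix a assume "pstar < a"
    then show "\<forall>\<^sub>F r in sequentially. l (Suc r) < a"
    proof (intro always_eventually allI)
      fix r have "l (Suc r) \<le> pstar" using ub[of "Suc r"] by simp
      then show "l (Suc r) < a" using \<open>pstar < a\<close> by simp
    qed
  qed
  show ?thesis using ub mono lim by blast
qed

end
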